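(* Let $\mathbb{N}$ be the natural numbers with the usual order and $\Sigma\mathbb{N}$ its Scott space (whose nonempty open sets are exactly the sets ${\uparrow}k$, $k\in\mathbb{N}$). Then $\Sigma\mathbb{N}$ is $S^{\ast}$-well-filtered but not well-filtered (hence not strongly well-filtered).
   Context: All spaces are $T_0$. The specialization order of $X$ is given by $x\le y$ iff $x\in cl(\{y\})$; ${\uparrow}$ is taken with respect to it; a subset is saturated if it is an upper set in the specialization order. $K(X)$ denotes the set of all nonempty compact saturated subsets of $X$; a family in $K(X)$ is filtered if any two members contain a common member. $X$ is well-filtered if for every filtered family $\{K_i\}\subseteq K(X)$ and every open $U$, $\bigcap_i K_i\subseteq U$ implies $K_i\subseteq U$ for some $i$. $X$ is strongly well-filtered if for every filtered $\{K_i\mid i\in I\}\subseteq K(X)$, every $G\in K(X)$ and every open $U$, $\bigcap_i K_i\cap G\subseteq U$ implies $K_i\cap G\subseteq U$ for some $i$. $X$ is $S^{\ast}$-well-filtered if this last implication holds for every nonempty open $U$. *)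

theory Defs
  imports "HOL-Analysis.Analysis"
begin

definition directed_set :: "'a::order set \<Rightarrow> bool" where
  "directed_set D \<longleftrightarrow> D \<noteq> {} \<and> (\<forall>x\<in>D. \<forall>y\<in>D. \<exists>z\<in>D. x \<le> z \<and> y \<le> z)"

definition is_lub :: "'a::order set \<Rightarrow> 'a \<Rightarrow> bool" where
  "is_lub D s \<longleftrightarrow> (\<forall>x\<in>D. x \<le> s) \<and> (\<forall>t. (\<forall>x\<in>D. x \<le> t) \<longrightarrow> s \<le> t)"

definition scott_open :: "'a::order set \<Rightarrow> bool" where
  "scott_open U \<longleftrightarrow> (\<forall>x y. x \<in> U \<and> x \<le> y \<longrightarrow> y \<in> U) \<and>
     (\<forall>D s. directed_set D \<and> is_lub D s \<and> s \<in> U \<longrightarrow> D \<inter> U \<noteq> {})"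

definition scott_topology :: "'a::order topology" where
  "scott_topology = topology scott_open"

definition spec_le :: "'a topology \<Rightarrow> 'a \<Rightarrow> 'a \<Rightarrow> bool" where
  "spec_le X x y \<longleftrightarrow> x \<in> X closure_of {y}"

definition saturated :: "'a topology \<Rightarrow> 'a set \<Rightarrow> bool" where
  "saturated X A \<longleftrightarrow> A \<subseteq> topspace X \<and>
     (\<forall>x y. x \<in> A \<and> y \<in> topspace X \<and> spec_le X x y \<longrightarrow> y \<in> A)"

definition KX :: "'a topology \<Rightarrow> 'a set set" where
  "KX X = {K. K \<noteq> {} \<and> compactin X K \<and> saturated X K}"

definition filtered_KX :: "'a topology \<Rightarrow> 'a set set \<Rightarrow> bool" where
  "filtered_KX X F \<longleftrightarrow> F \<noteq> {} \<and> F \<subseteq> KX X \<and>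
     (\<forall>A\<in>F. \<forall>B\<in>F. \<exists>C\<in>F. C \<subseteq> A \<and> C \<subseteq> B)"

definition well_filtered :: "'a topology \<Rightarrow> bool" where
  "well_filtered X \<longleftrightarrow> (\<forall>F U. filtered_KX X F \<and> openin X U \<and> \<Inter>F \<subseteq> U
     \<longrightarrow> (\<exists>K\<in>F. K \<subseteq> U))"

definition strongly_well_filtered :: "'a topology \<Rightarrow> bool" where
  "strongly_well_filtered X \<longleftrightarrow> (\<forall>F G U. filtered_KX X F \<and> G \<in> KX X \<and> openin X U
     \<and> \<Inter>F \<inter> G \<subseteq> U \<longrightarrow> (\<exists>K\<in>F. K \<inter> G \<subseteq> U))"

definition S_star_well_filtered :: "'a topology \<Rightarrow> bool" where
  "S_star_well_filtered X \<longleftrightarrow> (\<forall>F G U. filtered_KX X F \<and> G \<in> KX X \<and> openin X U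
     \<and> U \<noteq> {} \<and> \<Inter>F \<inter> G \<subseteq> U \<longrightarrow> (\<exists>K\<in>F. K \<inter> G \<subseteq> U))"

end

theory Submission
  imports Defs
begin

lemma scott_open_nat: "scott_open (U::nat set) \<longleftrightarrow> (\<forall>x y. x \<in> U \<and> x \<le> y \<longrightarrow> y \<in> U)"
proof -
  have "s \<in> D" if "directed_set D" "is_lub D (s::nat)" for D s
  proof -
    have ne: "D \<noteq> {}" using that(1) by (simp add: directed_set_def)
    have ub: "\<forall>x\<in>D. x \<le> s" using that(2) by (simp add: is_lub_def)
    hence fin: "finite D" using finite_subset[of D "{..s}"] by auto
    have "Max D \<in> D" using fin ne by simp
    moreover have "s \<le> Max D" using that(2) fin unfolding is_lub_def by simp
    moreover have "Max D \<le> s" using ub \<open>Max D \<in> D\<close> by blast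
    ultimately show ?thesis by simp
  qed
  thus ?thesis unfolding scott_open_def by blast
qed

lemma open_nat: "openin (scott_topology::nat topology) U \<longleftrightarrow> (\<forall>x y. x \<in> U \<and> x \<le> y \<longrightarrow> y \<in> U)"
proof -
  have "istopology (scott_open :: nat set \<Rightarrow> bool)"
    unfolding istopology_def scott_open_nat by blast
  hence "openin (scott_topology::nat topology) = scott_open"
    unfolding scott_topology_def by (simp add: topology_inverse')
  thus ?thesis by (simp add: scott_open_nat)
qed

lemma top_nat: "topspace (scott_topology::nat topology) = UNIV"
  unfolding topspace_def using open_nat[of UNIV] by auto

lemma spec_nat: "spec_le (scott_topology::nat topology) x y \<longleftrightarrow> x \<le> y"
proof
  assume "spec_le scott_topology x y"
  hence "\<forall>T. x \<in> T \<and> openin scott_topology T \<longrightarrow> y \<in> T"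
    unfolding spec_le_def in_closure_of by auto
  moreover have "openin scott_topology {x..}" by (auto simp: open_nat)
  ultimately show "x \<le> y" by auto
next
  assume "x \<le> y"
  thus "spec_le scott_topology x y"
    unfolding spec_le_def in_closure_of by (auto simp: top_nat open_nat)
qed

lemma sat_nat: "saturated (scott_topology::nat topology) K \<longleftrightarrow> (\<forall>x y. x \<in> K \<and> x \<le> y \<longrightarrow> y \<in> K)"
  unfolding saturated_def by (auto simp: spec_nat top_nat)

lemma KX_nat: "{k..} \<in> KX (scott_topology::nat topology)"
proof -
  have "compactin scott_topology {k::nat..}"
    unfolding compactin_def
  proof (intro conjI allI impI)
    fix \<U> assume a: "(\<forall>x\<in>\<U>. openin scott_topology x) \<and> {k..} \<subseteq> \<Union>\<U>"
    then obtain V where V: "V \<in> \<U>" "k \<in> V" by auto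
    hence "{k..} \<subseteq> V" using a open_nat by auto
    thus "\<exists>\<F>. finite \<F> \<and> \<F> \<subseteq> \<U> \<and> {k..} \<subseteq> \<Union>\<F>"
      using V by (intro exI[of _ "{V}"]) auto
  qed (simp add: top_nat)
  thus ?thesis unfolding KX_def by (auto simp: sat_nat)
qed

lemma not_wf_aux:
  "filtered_KX (scott_topology::nat topology) (range (\<lambda>k. {k..}))"
  "\<Inter> (range (\<lambda>k::nat. {k..})) = {}"
  unfolding filtered_KX_def
   apply (auto simp: KX_nat)
  subgoal for a b by (intro exI[of _ "max a b"]) auto
  by (metis Suc_n_not_le_n)

theorem mainTheorem9:
  shows "S_star_well_filtered (scott_topology :: nat topology) \<and>
         \<not> well_filtered (scott_topology :: nat topology) \<and>
         \<not> strongly_well_filtered (scott_topology :: nat topology)"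
proof (intro conjI)
  have o: "openin (scott_topology::nat topology) {}" by (simp add: open_nat)
  have k0: "{0::nat..} \<in> KX scott_topology" by (rule KX_nat)
  show "\<not> well_filtered (scott_topology :: nat topology)"
    unfolding well_filtered_def using not_wf_aux o
    by (intro notI) (drule spec[of _ "range (\<lambda>k::nat. {k..})"], drule spec[of _ "{}"], auto)
  show "\<not> strongly_well_filtered (scott_topology :: nat topology)"
    unfolding strongly_well_filtered_def using not_wf_aux o k0 by blast
  show "S_star_well_filtered (scott_topology :: nat topology)"
    unfolding S_star_well_filtered_def
  proof (intro allI impI)
    fix F G U
    assume A: "filtered_KX (scott_topology::nat topology) F \<and> G \<in> KX scott_topology \<and>
      openin scott_topology U \<and> U \<noteq> {} \<and> \<Inter> F \<inter> G \<subseteq> U"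
    hence Fne: "F \<noteq> {}" and FK: "F \<subseteq> KX scott_topology" and GK: "G \<in> KX scott_topology"
      and Uup: "\<forall>x y. x \<in> U \<and> x \<le> y \<longrightarrow> y \<in> U" and Une: "U \<noteq> {}" and sub: "\<Inter> F \<inter> G \<subseteq> U"
      by (auto simp: filtered_KX_def open_nat)
    have Gup: "\<forall>x y. x \<in> G \<and> x \<le> y \<longrightarrow> y \<in> G" using GK by (simp add: KX_def sat_nat)
    show "\<exists>K\<in>F. K \<inter> G \<subseteq> U"
    proof (cases "G \<subseteq> U")
      case True thus ?thesis using Fne by blast
    next
      case False
      then obtain g where g: "g \<in> G" "g \<notin> U" by auto
      define m where "m = (LEAST x. x \<in> U)"
      have mU: "m \<in> U" using Une unfolding m_def by (metis LeastI ex_in_conv)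
      have mle: "\<And>x. x \<in> U \<Longrightarrow> m \<le> x" unfolding m_def by (rule Least_le)
      have gm: "g < m" using g mU Uup by (meson not_le less_imp_le)
      have "g \<le> m - 1" using gm by simp
      hence m1G: "m - 1 \<in> G" using Gup g by blast
      have m1U: "m - 1 \<notin> U" using mle gm by fastforce
      then obtain K where K: "K \<in> F" "m - 1 \<notin> K" using sub m1G by blast
      have Kup: "\<forall>x y. x \<in> K \<and> x \<le> y \<longrightarrow> y \<in> K" using K FK by (auto simp: KX_def sat_nat)
      have "K \<subseteq> U"
      proof
        fix y assume "y \<in> K"
        hence "\<not> y \<le> m - 1" using Kup K by blast
        hence "m \<le> y" by simp
        thus "y \<in> U" using mU Uup by blast
      qed
      thus ?thesis using K by blast
    qed
  qed
qed

end
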